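(* Let $\mathbb{L}/\mathbb{K}$ be a finite Galois extension of degree $N$ whose Galois group $G$ is abelian, let $\mathcal{C}\subseteq\mathbb{L}[G]$ be an $\mathbb{L}$-linear subspace, and let $\mathcal{B}$ be an ordered $\mathbb{K}$-basis of $\mathbb{L}$ with trace-dual basis $\mathcal{B}^*$. Then $\mathcal{C}^\perp(\mathcal{B})=\big(\mathcal{C}(\mathcal{B}^* )\big)^\perp$, where on the left $\perp$ is taken in $\mathbb{L}[G]$ with respect to $\langle\cdot,\cdot\rangle_{\mathbb{L}[G]}$ and on the right in $\mathbb{L}^N$ with respect to the standard inner product $\mathbf{u}\cdot\mathbf{v}^\top$.
   Context: Elements $a=\sum_g a_g g\in\mathbb{L}[G]$ act on $\mathbb{L}$ by $x\mapsto\sum_g a_gg(x)$. For $\mathbf{b}=(b_1,\dots,b_N)\in\mathbb{L}^N$, $\mathrm{ev}_\mathbf{b}(a)=(a(b_1),\dots,a(b_N))$, and for $\mathcal{C}\subseteq\mathbb{L}[G]$, $\mathcal{C}(\mathbf{b})=\{\mathrm{ev}_\mathbf{b}(c):c\in\mathcal{C}\}$. The bilinear form on $\mathbb{L}[G]$ is $\langle\sum_ga_gg,\sum_gb_gg\rangle_{\mathbb{L}[G]}=\sum_g a_gb_g$, and $\mathcal{C}^\perp=\{a\in\mathbb{L}[G]:\langle a,b\rangle_{\mathbb{L}[G]}=0\ \forall b\in\mathcal{C}\}$. The trace-dual basis $\mathcal{B}^*=(b_1^*,\dots,b_N^* )$ satisfies $\mathrm{Tr}_{\mathbb{L}/\mathbb{K}}(b_ib_j^*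 )=\delta_{i,j}$ with $\mathrm{Tr}_{\mathbb{L}/\mathbb{K}}(x)=\sum_{g\in G}g(x)$. *)

theory Defs
  imports Main
begin

(* K is a subfield of the field 'a (playing the role of L) *)
definition is_subfield :: "'a::field set \<Rightarrow> bool" where
  "is_subfield K \<longleftrightarrow> 0 \<in> K \<and> 1 \<in> K \<and>
     (\<forall>x\<in>K. \<forall>y\<in>K. x + y \<in> K \<and> x * y \<in> K) \<and>
     (\<forall>x\<in>K. - x \<in> K \<and> inverse x \<in> K)"

definition field_aut :: "('a::field \<Rightarrow> 'a) \<Rightarrow> bool" where
  "field_aut \<sigma> \<longleftrightarrow> bij \<sigma> \<and> \<sigma> 1 = 1 \<and>
     (\<forall>x y. \<sigma> (x + y) = \<sigma> x + \<sigma> y \<and> \<sigma> (x * y) = \<sigma> x * \<sigma> y)"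

definition Gal :: "'a::field set \<Rightarrow> ('a \<Rightarrow> 'a) set" where
  "Gal K = {\<sigma>. field_aut \<sigma> \<and> (\<forall>x\<in>K. \<sigma> x = x)}"

definition finite_galois :: "'a::field set \<Rightarrow> bool" where
  "finite_galois K \<longleftrightarrow> is_subfield K \<and> finite (Gal K) \<and>
     {x. \<forall>\<sigma>\<in>Gal K. \<sigma> x = x} = K"

definition abelian_gal :: "'a::field set \<Rightarrow> bool" where
  "abelian_gal K \<longleftrightarrow> (\<forall>\<sigma>\<in>Gal K. \<forall>\<tau>\<in>Gal K. \<sigma> \<circ> \<tau> = \<tau> \<circ> \<sigma>)"

definition trace :: "'a::field set \<Rightarrow> 'a \<Rightarrow> 'a" where
  "trace K x = (\<Sum>\<sigma>\<in>Gal K. \<sigma> x)"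

definition is_K_basis :: "'a::field set \<Rightarrow> nat \<Rightarrow> (nat \<Rightarrow> 'a) \<Rightarrow> bool" where
  "is_K_basis K N b \<longleftrightarrow>
     (\<forall>c. (\<forall>i<N. c i \<in> K) \<longrightarrow> (\<Sum>i<N. c i * b i) = 0 \<longrightarrow> (\<forall>i<N. c i = 0)) \<and>
     (\<forall>x. \<exists>c. (\<forall>i<N. c i \<in> K) \<and> x = (\<Sum>i<N. c i * b i))"

definition trace_dual :: "'a::field set \<Rightarrow> nat \<Rightarrow> (nat \<Rightarrow> 'a) \<Rightarrow> (nat \<Rightarrow> 'a) \<Rightarrow> bool" where
  "trace_dual K N b bd \<longleftrightarrow>
     (\<forall>i<N. \<forall>j<N. trace K (b i * bd j) = (if i = j then 1 else 0))"

(* Group algebra L[G]: functions G \<Rightarrow> L, represented as functions vanishing off G *)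
definition grp_alg :: "('a \<Rightarrow> 'a) set \<Rightarrow> (('a \<Rightarrow> 'a) \<Rightarrow> 'a::field) set" where
  "grp_alg G = {a. \<forall>g. g \<notin> G \<longrightarrow> a g = 0}"

definition ga_subspace :: "('a \<Rightarrow> 'a) set \<Rightarrow> (('a \<Rightarrow> 'a) \<Rightarrow> 'a::field) set \<Rightarrow> bool" where
  "ga_subspace G C \<longleftrightarrow> C \<subseteq> grp_alg G \<and> (\<lambda>_. 0) \<in> C \<and>
     (\<forall>a\<in>C. \<forall>b\<in>C. (\<lambda>g. a g + b g) \<in> C) \<and>
     (\<forall>c. \<forall>a\<in>C. (\<lambda>g. c * a g) \<in> C)"

definition ga_act :: "('a \<Rightarrow> 'a) set \<Rightarrow> (('a \<Rightarrow> 'a) \<Rightarrow> 'a::field) \<Rightarrow> 'a \<Rightarrow> 'a" where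
  "ga_act G a x = (\<Sum>g\<in>G. a g * g x)"

definition ga_form :: "('a \<Rightarrow> 'a) set \<Rightarrow> (('a \<Rightarrow> 'a) \<Rightarrow> 'a::field) \<Rightarrow> (('a \<Rightarrow> 'a) \<Rightarrow> 'a) \<Rightarrow> 'a" where
  "ga_form G a b = (\<Sum>g\<in>G. a g * b g)"

definition ga_perp :: "('a \<Rightarrow> 'a) set \<Rightarrow> (('a \<Rightarrow> 'a) \<Rightarrow> 'a::field) set \<Rightarrow> (('a \<Rightarrow> 'a) \<Rightarrow> 'a) set" where
  "ga_perp G C = {a \<in> grp_alg G. \<forall>b\<in>C. ga_form G a b = 0}"

definition ev :: "('a \<Rightarrow> 'a) set \<Rightarrow> nat \<Rightarrow> (nat \<Rightarrow> 'a) \<Rightarrow> (('a \<Rightarrow> 'a) \<Rightarrow> 'a::field) \<Rightarrow> 'a list" where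
  "ev G N b a = map (\<lambda>i. ga_act G a (b i)) [0..<N]"

definition vec_perp :: "nat \<Rightarrow> 'a::field list set \<Rightarrow> 'a list set" where
  "vec_perp N S = {v. length v = N \<and> (\<forall>u\<in>S. (\<Sum>i<N. v ! i * u ! i) = 0)}"

end

theory Submission
  imports Defs
begin

lemma gal_add: "g \<in> Gal K \<Longrightarrow> g (x + y) = g x + g y"
  by (simp add: Gal_def field_aut_def)
lemma gal_mult: "g \<in> Gal K \<Longrightarrow> g (x * y) = g x * g y"
  by (simp add: Gal_def field_aut_def)
lemma gal_one: "g \<in> Gal K \<Longrightarrow> g 1 = 1"
  by (simp add: Gal_def field_aut_def)
lemma gal_bij: "g \<in> Gal K \<Longrightarrow> bij g"
  by (simp add: Gal_def field_aut_def)
lemma gal_fix: "g \<in> Gal K \<Longrightarrow> x \<in> K \<Longrightarrow> g x = x"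
  by (simp add: Gal_def)
lemma gal_zero: assumes "g \<in> Gal K" shows "g 0 = 0"
proof -
  have "g (0+0) = g 0 + g 0" using gal_add[OF assms] .
  then show ?thesis by (metis add.right_neutral add_left_cancel)
qed
lemma gal_sum: assumes "g \<in> Gal K" shows "g (sum f A) = (\<Sum>x\<in>A. g (f x))"
  by (induction A rule: infinite_finite_induct) (auto simp: gal_zero[OF assms] gal_add[OF assms])

lemma gal_id: "id \<in> Gal K"
  by (simp add: Gal_def field_aut_def)

lemma gal_comp: "g \<in> Gal K \<Longrightarrow> h \<in> Gal K \<Longrightarrow> g \<circ> h \<in> Gal K"
  by (auto simp: Gal_def field_aut_def intro: bij_comp)

lemma gal_inv: assumes g: "g \<in> Gal K" shows "inv g \<in> Gal K"
proof -
  have b: "bij g" using gal_bij[OF g] .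
  have i: "inj g" using b bij_is_inj by blast
  have s: "\<And>x. g (inv g x) = x" using b by (simp add: bij_is_surj surj_f_inv_f)
  have "bij (inv g)" using b bij_imp_bij_inv by blast
  moreover have "inv g 1 = 1" using gal_one[OF g] i by (metis inv_f_f)
  moreover have "inv g (x + y) = inv g x + inv g y" for x y
    using i s gal_add[OF g, of "inv g x" "inv g y"] by (metis inv_f_f)
  moreover have "inv g (x * y) = inv g x * inv g y" for x y
    using i s gal_mult[OF g, of "inv g x" "inv g y"] by (metis inv_f_f)
  moreover have "inv g x = x" if "x \<in> K" for x
    using gal_fix[OF g that] i by (metis inv_f_f)
  ultimately show ?thesis by (simp add: Gal_def field_aut_def)
qed

lemma dedekind:
  assumes "finite S" "S \<subseteq> Gal K" "\<forall>x. (\<Sum>s\<in>S. c s * s x) = 0"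
  shows "\<forall>s\<in>S. c s = 0"
  using assms(1,2,3)
proof (induction S arbitrary: c rule: finite_induct)
  case empty then show ?case by simp
next
  case (insert t S)
  have tG: "t \<in> Gal K" using insert by auto
  have SG: "S \<subseteq> Gal K" using insert by auto
  have eq: "\<And>x. c t * t x + (\<Sum>s\<in>S. c s * s x) = 0"
    using insert.prems(2) insert.hyps by simp
  have key: "\<forall>s\<in>S. c s * (s y - t y) = 0" for y
  proof -
    have "\<forall>x. (\<Sum>s\<in>S. (c s * (s y - t y)) * s x) = 0"
    proof
      fix x
      have e1: "(\<Sum>s\<in>S. c s * s (y*x)) = - (c t * t (y*x))" using eq[of "y*x"] by (simp add: eq_neg_iff_add_eq_0 add.commute)
      have e2: "(\<Sum>s\<in>S. c s * s x) = - (c t * t x)" using eq[of x] by (simp add: eq_neg_iff_add_eq_0 add.commute)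
      have "(\<Sum>s\<in>S. (c s * (s y - t y)) * s x) = (\<Sum>s\<in>S. c s * s (y*x) - t y * (c s * s x))"
        apply (rule sum.cong, simp)
        using SG gal_mult by (fastforce simp: algebra_simps)
      also have "\<dots> = (\<Sum>s\<in>S. c s * s (y*x)) - t y * (\<Sum>s\<in>S. c s * s x)"
        by (simp add: sum_subtractf sum_distrib_left)
      also have "\<dots> = 0" using e1 e2 gal_mult[OF tG, of y x] by (simp add: algebra_simps)
      finally show "(\<Sum>s\<in>S. (c s * (s y - t y)) * s x) = 0" .
    qed
    then show ?thesis using insert.IH[of "\<lambda>s. c s * (s y - t y)"] SG by blast
  qed
  have cS: "\<forall>s\<in>S. c s = 0"
  proof
    fix s assume sS: "s \<in> S"
    then have "s \<noteq> t" using insert.hyps by auto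
    then obtain y where "s y \<noteq> t y" by auto
    then show "c s = 0" using key[of y] sS by auto
  qed
  have "c t * t 1 = 0" using eq[of 1] cS by simp
  then have "c t = 0" using gal_one[OF tG] by simp
  then show ?case using cS by simp
qed

lemma trace_K_lin:
  assumes "c \<in> K" shows "trace K (c * y) = c * trace K y"
  unfolding trace_def sum_distrib_left
  by (rule sum.cong) (auto simp: gal_mult gal_fix assms)

lemma trace_sum: "trace K (sum f A) = (\<Sum>j\<in>A. trace K (f j))"
  unfolding trace_def by (simp add: gal_sum sum.swap[of _ "Gal K"])

lemma dual_delta:
  assumes fg: "finite_galois K" and bas: "is_K_basis K N b" and td: "trace_dual K N b bd"
    and g: "g \<in> Gal K" and h: "h \<in> Gal K"
  shows "(\<Sum>i<N. g (b i) * h (bd i)) = (if g = h then 1 else 0)"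
proof -
  define d where "d \<sigma> = (\<Sum>i<N. b i * \<sigma> (bd i))" for \<sigma> :: "'a \<Rightarrow> 'a"
  have fin: "finite (Gal K)" using fg by (simp add: finite_galois_def)
  have dx: "(\<Sum>\<sigma>\<in>Gal K. d \<sigma> * \<sigma> x) = x" for x
  proof -
    obtain c where cK: "\<forall>i<N. c i \<in> K" and x: "x = (\<Sum>j<N. c j * b j)"
      using bas unfolding is_K_basis_def by blast
    have tr: "trace K (x * bd i) = c i" if i: "i < N" for i
    proof -
      have "trace K (x * bd i) = (\<Sum>j<N. trace K (c j * (b j * bd i)))"
        unfolding x sum_distrib_right trace_sum by (simp add: mult.assoc)
      also have "\<dots> = (\<Sum>j<N. c j * (if j = i then 1 else 0))"
        apply (rule sum.cong, simp)
        using cK td i by (simp add: trace_K_lin trace_dual_def)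
      also have "\<dots> = c i" using i by (simp add: if_distrib cong: if_cong)
      finally show ?thesis .
    qed
    have "(\<Sum>\<sigma>\<in>Gal K. d \<sigma> * \<sigma> x) = (\<Sum>\<sigma>\<in>Gal K. \<Sum>i<N. b i * \<sigma> (x * bd i))"
      unfolding d_def sum_distrib_right
      by (rule sum.cong, simp, rule sum.cong) (auto simp: gal_mult mult_ac)
    also have "\<dots> = (\<Sum>i<N. b i * trace K (x * bd i))"
      unfolding trace_def sum_distrib_left by (rule sum.swap)
    also have "\<dots> = (\<Sum>i<N. c i * b i)"
      by (rule sum.cong) (auto simp: tr mult.commute)
    finally show ?thesis using x by simp
  qed
  have dd: "\<forall>\<sigma>\<in>Gal K. d \<sigma> - (if \<sigma> = id then 1 else 0) = 0"
  proof (rule dedekind[OF fin subset_refl], rule allI)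
    fix x
    have "(\<Sum>\<sigma>\<in>Gal K. (d \<sigma> - (if \<sigma> = id then 1 else 0)) * \<sigma> x)
        = (\<Sum>\<sigma>\<in>Gal K. d \<sigma> * \<sigma> x) - (\<Sum>\<sigma>\<in>Gal K. (if \<sigma> = id then x else 0))"
      unfolding sum_subtractf[symmetric] by (rule sum.cong) (auto simp: algebra_simps)
    also have "\<dots> = 0" using dx gal_id[of K] fin by simp
    finally show "(\<Sum>\<sigma>\<in>Gal K. (d \<sigma> - (if \<sigma> = id then 1 else 0)) * \<sigma> x) = 0" .
  qed
  define s where "s = inv g \<circ> h"
  have sG: "s \<in> Gal K" unfolding s_def using gal_comp gal_inv g h by blast
  have bg: "bij g" using gal_bij[OF g] .
  have gi: "\<And>x. g (inv g x) = x" using bg by (simp add: bij_is_surj surj_f_inv_f)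
  have ig: "\<And>x. inv g (g x) = x" using bg by (simp add: bij_is_inj inv_f_f)
  have "(\<Sum>i<N. g (b i) * h (bd i)) = g (d s)"
    unfolding d_def s_def by (simp add: gal_sum[OF g] gal_mult[OF g] gi)
  also have "\<dots> = g (if s = id then 1 else 0)" using dd sG by simp
  also have "\<dots> = (if g = h then 1 else 0)"
  proof -
    have "s = id \<longleftrightarrow> g = h"
    proof
      assume "s = id"
      then have "\<And>x. inv g (h x) = x" unfolding s_def by (metis comp_apply id_apply)
      then have "\<And>x. h x = g x" by (metis gi)
      then show "g = h" by auto
    next
      assume "g = h" then show "s = id" unfolding s_def using ig by auto
    qed
    then show ?thesis using gal_one[OF g] gal_zero[OF g] by auto
  qed
  finally show ?thesis .
qed

theorem mainTheorem10:
  fixes K :: "'a::field set" and N :: nat and b bd :: "nat \<Rightarrow> 'a"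
    and C :: "(('a \<Rightarrow> 'a) \<Rightarrow> 'a) set"
  assumes "finite_galois K"
    and "abelian_gal K"
    and "ga_subspace (Gal K) C"
    and "is_K_basis K N b"
    and "trace_dual K N b bd"
  shows "ev (Gal K) N b ` ga_perp (Gal K) C = vec_perp N (ev (Gal K) N bd ` C)"
proof
  let ?G = "Gal K"
  have fin: "finite ?G" using assms(1) by (simp add: finite_galois_def)
  have evn: "ev ?G N f a ! i = ga_act ?G a (f i)" if "i < N" for f a i
    using that by (simp add: ev_def)
  show "ev ?G N b ` ga_perp ?G C \<subseteq> vec_perp N (ev ?G N bd ` C)"
  proof
    fix v assume "v \<in> ev ?G N b ` ga_perp ?G C"
    then obtain a where a: "a \<in> ga_perp ?G C" and v: "v = ev ?G N b a" by auto
    have "(\<Sum>i<N. v ! i * u ! i) = 0" if u: "u \<in> ev ?G N bd ` C" for u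
    proof -
      obtain c where cC: "c \<in> C" and uc: "u = ev ?G N bd c" using u by auto
      have "(\<Sum>i<N. v ! i * u ! i) = (\<Sum>i<N. (\<Sum>g\<in>?G. a g * g (b i)) * (\<Sum>h\<in>?G. c h * h (bd i)))"
        by (rule sum.cong) (auto simp: v uc evn ga_act_def)
      also have "\<dots> = (\<Sum>g\<in>?G. \<Sum>h\<in>?G. a g * c h * (\<Sum>i<N. g (b i) * h (bd i)))"
      proof -
        have "(\<Sum>i<N. (\<Sum>g\<in>?G. a g * g (b i)) * (\<Sum>h\<in>?G. c h * h (bd i)))
            = (\<Sum>i<N. \<Sum>g\<in>?G. \<Sum>h\<in>?G. a g * c h * (g (b i) * h (bd i)))"
          unfolding sum_product by (simp add: mult_ac)
        also have "\<dots> = (\<Sum>g\<in>?G. \<Sum>i<N. \<Sum>h\<in>?G. a g * c h * (g (b i) * h (bd i)))"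
          by (rule sum.swap)
        also have "\<dots> = (\<Sum>g\<in>?G. \<Sum>h\<in>?G. \<Sum>i<N. a g * c h * (g (b i) * h (bd i)))"
          by (rule sum.cong, simp, rule sum.swap)
        finally show ?thesis by (simp add: sum_distrib_left)
      qed
      also have "\<dots> = (\<Sum>g\<in>?G. \<Sum>h\<in>?G. if g = h then a g * c h else 0)"
        by (rule sum.cong, simp, rule sum.cong, simp) (simp add: dual_delta[OF assms(1,4,5)])
      also have "\<dots> = ga_form ?G a c" using fin by (simp add: ga_form_def)
      also have "\<dots> = 0" using a cC by (simp add: ga_perp_def)
      finally show ?thesis .
    qed
    moreover have "length v = N" by (simp add: v ev_def)
    ultimately show "v \<in> vec_perp N (ev ?G N bd ` C)" unfolding vec_perp_def by blast
  qed
  show "vec_perp N (ev ?G N bd ` C) \<subseteq> ev ?G N b ` ga_perp ?G C"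
  proof
    fix v assume vp: "v \<in> vec_perp N (ev ?G N bd ` C)"
    have lv: "length v = N" using vp by (simp add: vec_perp_def)
    define a where "a h = (if h \<in> ?G then (\<Sum>i<N. v ! i * h (bd i)) else 0)" for h
    have aG: "a \<in> grp_alg ?G" by (simp add: grp_alg_def a_def)
    have "ev ?G N b a = v"
    proof (rule nth_equalityI)
      show "length (ev ?G N b a) = length v" using lv by (simp add: ev_def)
      fix j assume "j < length (ev ?G N b a)"
      then have j: "j < N" by (simp add: ev_def)
      have "ev ?G N b a ! j = (\<Sum>h\<in>?G. (\<Sum>i<N. v ! i * h (bd i)) * h (b j))"
        using j by (simp add: evn ga_act_def a_def)
      also have "\<dots> = (\<Sum>i<N. v ! i * trace K (b j * bd i))"
        unfolding trace_def sum_distrib_right sum_distrib_left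
        by (subst sum.swap, rule sum.cong, simp, rule sum.cong, simp) (simp add: gal_mult mult_ac)
      also have "\<dots> = (\<Sum>i<N. v ! i * (if j = i then 1 else 0))"
        by (rule sum.cong, simp) (use assms(5) j in \<open>simp add: trace_dual_def\<close>)
      also have "\<dots> = v ! j" using j by (simp add: if_distrib cong: if_cong)
      finally show "ev ?G N b a ! j = v ! j" .
    qed
    moreover have "a \<in> ga_perp ?G C"
    proof -
      have "ga_form ?G a c = 0" if cC: "c \<in> C" for c
      proof -
        have "ga_form ?G a c = (\<Sum>h\<in>?G. (\<Sum>i<N. v ! i * h (bd i)) * c h)"
          by (simp add: ga_form_def a_def)
        also have "\<dots> = (\<Sum>i<N. v ! i * ev ?G N bd c ! i)"
          unfolding sum_distrib_right
          by (subst sum.swap, rule sum.cong, simp)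
             (simp add: evn ga_act_def sum_distrib_left mult_ac)
        also have "\<dots> = 0" using vp cC by (simp add: vec_perp_def)
        finally show ?thesis .
      qed
      then show ?thesis using aG by (simp add: ga_perp_def)
    qed
    ultimately show "v \<in> ev ?G N b ` ga_perp ?G C" by (metis image_eqI)
  qed
qed

end
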